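(* Let $\mathsf{L}$ be an intermediate logic. Every consistent formula of the form $\neg\phi$ is $\mathcal{ST}$-projective in $\mathsf{L}^\neg$, where $\mathcal{ST}$ is the class of all substitutions that are stable in $\mathsf{L}^\neg$.
   Context: Formulas are built from propositional variables, $\bot,\top$ with $\wedge,\vee,\to$; $\neg\phi:=\phi\to\bot$. An intermediate theory is a set $\mathsf T$ of formulas closed under modus ponens with $\mathsf{IPC}\subseteq\mathsf T\subseteq\mathsf{CPC}$; an intermediate logic is an intermediate theory closed under uniform substitution. $\Gamma\vdash_{\mathsf T}\phi$ means $\phi$ is derivable from $\Gamma\cup\mathsf T$ by modus ponens; $\vdash_{\mathsf T}\phi$ means $\phi\in\mathsf T$. For an intermediate logic $\mathsf L$, $\phi^\neg$ is obtained by replacing every propositional variable $p$ in $\phi$ by $\neg p$, and $\mathsf L^\neg=\{\phi\mid\phi^\neg\in\mathsf L\}$. A substitution is a map on formulas commuting with the connectives and constants; it is stable in $\mathsf L^\neg$ if $\vdash_{\mathsf L^\neg}\sigma(p)\leftrightarrow\neg\neg\sigma(p)$ for all propositional variables $p$. A formula $\psi$ is consistent if $\psi\nvdash_{\mathsf L^\neg}\bot$. For a set $\mathcal S$ of substitutions, $\psi$ is $\mathcal S$-projective in $\mathsf L^\neg$ if there is $\sigma\in\mathcal S$ with $\vdash_{\mathsf L^\neg}\sigma(\psi)$, and $\psi,\sigma(p)\vdash_{\mathsf L^\neg}p$ and $\psi,p\vdash_{\mathsf L^\neg}\sigma(p)$ for all propositional variables $p$. *)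

theory Defs
  imports Main
begin

datatype form = Var nat | Bot | Top | And form form | Or form form | Imp form form

definition Neg :: "form \<Rightarrow> form" where "Neg \<phi> = Imp \<phi> Bot"

definition Iff :: "form \<Rightarrow> form \<Rightarrow> form" where
  "Iff \<phi> \<psi> = And (Imp \<phi> \<psi>) (Imp \<psi> \<phi>)"

type_synonym subst = "nat \<Rightarrow> form"

fun apply_subst :: "subst \<Rightarrow> form \<Rightarrow> form" where
  "apply_subst s (Var p) = s p"
| "apply_subst s Bot = Bot"
| "apply_subst s Top = Top"
| "apply_subst s (And a b) = And (apply_subst s a) (apply_subst s b)"
| "apply_subst s (Or a b) = Or (apply_subst s a) (apply_subst s b)"
| "apply_subst s (Imp a b) = Imp (apply_subst s a) (apply_subst s b)"

inductive_set IPC :: "form set" where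
  ax1: "Imp a (Imp b a) \<in> IPC"
| ax2: "Imp (Imp a (Imp b c)) (Imp (Imp a b) (Imp a c)) \<in> IPC"
| ax3: "Imp (And a b) a \<in> IPC"
| ax4: "Imp (And a b) b \<in> IPC"
| ax5: "Imp a (Imp b (And a b)) \<in> IPC"
| ax6: "Imp a (Or a b) \<in> IPC"
| ax7: "Imp b (Or a b) \<in> IPC"
| ax8: "Imp (Imp a c) (Imp (Imp b c) (Imp (Or a b) c)) \<in> IPC"
| ax9: "Imp Bot a \<in> IPC"
| ax10: "Top \<in> IPC"
| mp: "Imp a b \<in> IPC \<Longrightarrow> a \<in> IPC \<Longrightarrow> b \<in> IPC"

fun eval :: "(nat \<Rightarrow> bool) \<Rightarrow> form \<Rightarrow> bool" where
  "eval v (Var p) = v p"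
| "eval v Bot = False"
| "eval v Top = True"
| "eval v (And a b) = (eval v a \<and> eval v b)"
| "eval v (Or a b) = (eval v a \<or> eval v b)"
| "eval v (Imp a b) = (eval v a \<longrightarrow> eval v b)"

definition CPC :: "form set" where "CPC = {\<phi>. \<forall>v. eval v \<phi>}"

definition closed_mp :: "form set \<Rightarrow> bool" where
  "closed_mp T \<longleftrightarrow> (\<forall>a b. Imp a b \<in> T \<longrightarrow> a \<in> T \<longrightarrow> b \<in> T)"

definition intermediate_theory :: "form set \<Rightarrow> bool" where
  "intermediate_theory T \<longleftrightarrow> closed_mp T \<and> IPC \<subseteq> T \<and> T \<subseteq> CPC"

definition intermediate_logic :: "form set \<Rightarrow> bool" where
  "intermediate_logic L \<longleftrightarrow> intermediate_theory L \<and>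
     (\<forall>s \<phi>. \<phi> \<in> L \<longrightarrow> apply_subst s \<phi> \<in> L)"

inductive derives :: "form set \<Rightarrow> form set \<Rightarrow> form \<Rightarrow> bool" for T :: "form set" where
  hyp: "\<phi> \<in> \<Gamma> \<Longrightarrow> derives T \<Gamma> \<phi>"
| thy: "\<phi> \<in> T \<Longrightarrow> derives T \<Gamma> \<phi>"
| mp: "derives T \<Gamma> (Imp a b) \<Longrightarrow> derives T \<Gamma> a \<Longrightarrow> derives T \<Gamma> b"

definition neg_trans :: "form \<Rightarrow> form" where
  "neg_trans \<phi> = apply_subst (\<lambda>p. Neg (Var p)) \<phi>"

definition neg_logic :: "form set \<Rightarrow> form set" where
  "neg_logic L = {\<phi>. neg_trans \<phi> \<in> L}"

definition stable_in :: "form set \<Rightarrow> subst \<Rightarrow> bool" where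
  "stable_in T s \<longleftrightarrow> (\<forall>p. derives T {} (Iff (s p) (Neg (Neg (s p)))))"

definition consistent_in :: "form set \<Rightarrow> form \<Rightarrow> bool" where
  "consistent_in T \<psi> \<longleftrightarrow> \<not> derives T {\<psi>} Bot"

definition projective_in :: "subst set \<Rightarrow> form set \<Rightarrow> form \<Rightarrow> bool" where
  "projective_in S T \<psi> \<longleftrightarrow> (\<exists>s\<in>S. derives T {} (apply_subst s \<psi>) \<and>
      (\<forall>p. derives T {\<psi>, s p} (Var p) \<and> derives T {\<psi>, Var p} (s p)))"

end

theory Submission
  imports Defs
begin

fun vars :: "form \<Rightarrow> nat set" where
  "vars (Var p) = {p}"
| "vars Bot = {}"
| "vars Top = {}"
| "vars (And a b) = vars a \<union> vars b"
| "vars (Or a b) = vars a \<union> vars b"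
| "vars (Imp a b) = vars a \<union> vars b"

lemma finite_vars: "finite (vars x)" by (induction x) auto

lemma subst_Neg[simp]: "apply_subst s (Neg a) = Neg (apply_subst s a)"
  by (simp add: Neg_def)
lemma eval_Neg[simp]: "eval v (Neg a) = (\<not> eval v a)"
  by (simp add: Neg_def)
lemma subst_Var: "apply_subst Var x = x" by (induction x) auto
lemma eval_subst: "eval v (apply_subst s x) = eval (\<lambda>p. eval v (s p)) x"
  by (induction x) auto

lemma subst_IPC: "x \<in> IPC \<Longrightarrow> apply_subst s x \<in> IPC"
  by (induction rule: IPC.induct) (auto intro: IPC.intros)

lemma derives_IPC: "derives IPC {} x \<Longrightarrow> x \<in> IPC"
  by (induction "{}::form set" x rule: derives.induct) (auto intro: IPC.mp)

context fixes T :: "form set" assumes ipc: "IPC \<subseteq> T"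
begin

lemma ax: "x \<in> IPC \<Longrightarrow> derives T \<Gamma> x" using ipc by (auto intro: derives.thy)

lemma mono: "derives T \<Gamma> a \<Longrightarrow> \<Gamma> \<subseteq> \<Delta> \<Longrightarrow> derives T \<Delta> a"
  by (induction rule: derives.induct) (auto intro: derives.intros)

lemma wk: "derives T \<Gamma> a \<Longrightarrow> derives T (insert b \<Gamma>) a"
  using mono by blast

lemma hy: "derives T (insert a \<Gamma>) a" by (auto intro: derives.hyp)
lemma hy2: "derives T (insert b (insert a \<Gamma>)) a" by (auto intro: derives.hyp)
lemma hy3: "derives T (insert c (insert b (insert a \<Gamma>))) a" by (auto intro: derives.hyp)

lemma imp_refl: "derives T \<Gamma> (Imp a a)"
proof -
  have 1: "derives T \<Gamma> (Imp (Imp a (Imp (Imp a a) a)) (Imp (Imp a (Imp a a)) (Imp a a)))"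
    by (rule ax, rule IPC.ax2)
  have 2: "derives T \<Gamma> (Imp a (Imp (Imp a a) a))" by (rule ax, rule IPC.ax1)
  have 3: "derives T \<Gamma> (Imp a (Imp a a))" by (rule ax, rule IPC.ax1)
  show ?thesis using derives.mp[OF derives.mp[OF 1 2] 3] .
qed

lemma impI: "derives T (insert a \<Gamma>) b \<Longrightarrow> derives T \<Gamma> (Imp a b)"
proof (induction "insert a \<Gamma>" b rule: derives.induct)
  case (hyp \<phi>)
  then show ?case
  proof
    assume "\<phi> = a" then show ?thesis using imp_refl by simp
  next
    assume "\<phi> \<in> \<Gamma>"
    then show ?thesis using derives.mp[OF ax[OF IPC.ax1] derives.hyp] by blast
  qed
next
  case (thy \<phi>)
  then show ?case using derives.mp[OF ax[OF IPC.ax1] derives.thy] by blast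
next
  case (mp x b)
  then show ?case using derives.mp[OF derives.mp[OF ax[OF IPC.ax2]]] by blast
qed

lemma impE: "derives T \<Gamma> (Imp a b) \<Longrightarrow> derives T \<Gamma> a \<Longrightarrow> derives T \<Gamma> b"
  by (rule derives.mp)

lemma cut: "derives T \<Gamma> a \<Longrightarrow> derives T (insert a \<Gamma>) b \<Longrightarrow> derives T \<Gamma> b"
  using impE impI by blast

lemma andI: "derives T \<Gamma> a \<Longrightarrow> derives T \<Gamma> b \<Longrightarrow> derives T \<Gamma> (And a b)"
  using impE[OF impE[OF ax[OF IPC.ax5]]] by blast
lemma andE1: "derives T \<Gamma> (And a b) \<Longrightarrow> derives T \<Gamma> a"
  using impE[OF ax[OF IPC.ax3]] by blast
lemma andE2: "derives T \<Gamma> (And a b) \<Longrightarrow> derives T \<Gamma> b"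
  using impE[OF ax[OF IPC.ax4]] by blast
lemma orI1: "derives T \<Gamma> a \<Longrightarrow> derives T \<Gamma> (Or a b)"
  using impE[OF ax[OF IPC.ax6]] by blast
lemma orI2: "derives T \<Gamma> b \<Longrightarrow> derives T \<Gamma> (Or a b)"
  using impE[OF ax[OF IPC.ax7]] by blast
lemma orE: "derives T \<Gamma> (Or a b) \<Longrightarrow> derives T (insert a \<Gamma>) c \<Longrightarrow> derives T (insert b \<Gamma>) c
   \<Longrightarrow> derives T \<Gamma> c"
proof -
  assume h0: "derives T \<Gamma> (Or a b)" and h1: "derives T (insert a \<Gamma>) c"
    and h2: "derives T (insert b \<Gamma>) c"
  show ?thesis
    by (rule impE[OF impE[OF impE[OF ax[OF IPC.ax8] impI[OF h1]] impI[OF h2]] h0])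
qed
lemma botE: "derives T \<Gamma> Bot \<Longrightarrow> derives T \<Gamma> a"
  using impE[OF ax[OF IPC.ax9]] by blast
lemma negI: "derives T (insert a \<Gamma>) Bot \<Longrightarrow> derives T \<Gamma> (Neg a)"
  unfolding Neg_def by (rule impI)
lemma negE: "derives T \<Gamma> (Neg a) \<Longrightarrow> derives T \<Gamma> a \<Longrightarrow> derives T \<Gamma> Bot"
  unfolding Neg_def by (rule impE)

lemma cases_neg:
  assumes h1: "derives T (insert a \<Gamma>) (Neg c)" and h2: "derives T (insert (Neg a) \<Gamma>) (Neg c)"
  shows "derives T \<Gamma> (Neg c)"
proof (rule negI)
  have na: "derives T (insert c \<Gamma>) (Neg a)"
    apply (rule negI)
    apply (rule negE[OF mono[OF h1]])
     apply blast
    by (rule hy2)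
  have "derives T (insert c \<Gamma>) (Neg c)"
    apply (rule cut[OF na])
    apply (rule mono[OF h2]) by blast
  then show "derives T (insert c \<Gamma>) Bot" using negE hy by blast
qed

lemma kalmar:
  "(\<forall>p\<in>vars x. derives T \<Gamma> (if w p then s p else Neg (s p))) \<Longrightarrow>
   derives T \<Gamma> (if eval w x then apply_subst s x else Neg (apply_subst s x))"
proof (induction x)
  case (Var p) then show ?case by (cases "w p") auto
next
  case Bot then show ?case by (simp add: negI hy)
next
  case Top then show ?case by (simp add: ax IPC.ax10)
next
  case (And a b)
  then have A: "derives T \<Gamma> (if eval w a then apply_subst s a else Neg (apply_subst s a))"
    and B: "derives T \<Gamma> (if eval w b then apply_subst s b else Neg (apply_subst s b))" by auto
  show ?case
  proof (cases "eval w a")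
    case ta: True
    show ?thesis
    proof (cases "eval w b")
      case True with ta A B show ?thesis by (simp add: andI)
    next
      case False
      with B have B': "derives T \<Gamma> (Neg (apply_subst s b))" by simp
      have "derives T \<Gamma> (Neg (And (apply_subst s a) (apply_subst s b)))"
        by (rule negI, rule negE[OF wk[OF B'] andE2[OF hy]])
      with ta False show ?thesis by simp
    qed
  next
    case False
    with A have A': "derives T \<Gamma> (Neg (apply_subst s a))" by simp
    have "derives T \<Gamma> (Neg (And (apply_subst s a) (apply_subst s b)))"
      by (rule negI, rule negE[OF wk[OF A'] andE1[OF hy]])
    with False show ?thesis by simp
  qed
next
  case (Or a b)
  then have A: "derives T \<Gamma> (if eval w a then apply_subst s a else Neg (apply_subst s a))"
    and B: "derives T \<Gamma> (if eval w b then apply_subst s b else Neg (apply_subst s b))" by auto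
  show ?case
  proof (cases "eval w a")
    case True with A show ?thesis by (simp add: orI1)
  next
    case fa: False
    show ?thesis
    proof (cases "eval w b")
      case True with fa B show ?thesis by (simp add: orI2)
    next
      case False
      with B have B': "derives T \<Gamma> (Neg (apply_subst s b))" by simp
      from fa A have A': "derives T \<Gamma> (Neg (apply_subst s a))" by simp
      from False fa show ?thesis
        apply simp
        apply (rule negI)
        apply (rule orE[OF hy])
         apply (rule negE[OF wk[OF wk[OF A']] hy])
        by (rule negE[OF wk[OF wk[OF B']] hy])
    qed
  qed
next
  case (Imp a b)
  then have A: "derives T \<Gamma> (if eval w a then apply_subst s a else Neg (apply_subst s a))"
    and B: "derives T \<Gamma> (if eval w b then apply_subst s b else Neg (apply_subst s b))" by auto
  show ?case
  proof (cases "eval w a")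
    case ta: True
    show ?thesis
    proof (cases "eval w b")
      case True with B show ?thesis by (simp add: impI wk)
    next
      case False
      with B have B': "derives T \<Gamma> (Neg (apply_subst s b))" by simp
      from ta A have A': "derives T \<Gamma> (apply_subst s a)" by simp
      from False ta show ?thesis
        apply simp
        apply (rule negI)
        by (rule negE[OF wk[OF B'] impE[OF hy wk[OF A']]])
    qed
  next
    case False
    with A have A': "derives T \<Gamma> (Neg (apply_subst s a))" by simp
    from False show ?thesis
      apply simp
      apply (rule impI)
      by (rule botE, rule negE[OF wk[OF A'] hy])
  qed
qed

lemma cong:
  assumes "\<forall>p. derives T \<Gamma> (Imp (s p) (Var p)) \<and> derives T \<Gamma> (Imp (Var p) (s p))"
  shows "derives T \<Gamma> (Imp (apply_subst s x) x) \<and> derives T \<Gamma> (Imp x (apply_subst s x))"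
proof (induction x)
  case (Var p) then show ?case using assms by simp
next
  case Bot then show ?case by (simp add: imp_refl)
next
  case Top then show ?case by (simp add: imp_refl)
next
  case (And a b)
  then have a1: "derives T \<Gamma> (Imp (apply_subst s a) a)" and a2: "derives T \<Gamma> (Imp a (apply_subst s a))"
    and b1: "derives T \<Gamma> (Imp (apply_subst s b) b)" and b2: "derives T \<Gamma> (Imp b (apply_subst s b))" by auto
  show ?case
    apply simp
    apply (rule conjI; rule impI; rule andI)
       apply (rule impE[OF wk[OF a1] andE1[OF hy]])
      apply (rule impE[OF wk[OF b1] andE2[OF hy]])
     apply (rule impE[OF wk[OF a2] andE1[OF hy]])
    by (rule impE[OF wk[OF b2] andE2[OF hy]])
next
  case (Or a b)
  then have a1: "derives T \<Gamma> (Imp (apply_subst s a) a)" and a2: "derives T \<Gamma> (Imp a (apply_subst s a))"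
    and b1: "derives T \<Gamma> (Imp (apply_subst s b) b)" and b2: "derives T \<Gamma> (Imp b (apply_subst s b))" by auto
  show ?case
    apply simp
    apply (rule conjI; rule impI; rule orE[OF hy])
       apply (rule orI1, rule impE[OF wk[OF wk[OF a1]] hy])
      apply (rule orI2, rule impE[OF wk[OF wk[OF b1]] hy])
     apply (rule orI1, rule impE[OF wk[OF wk[OF a2]] hy])
    by (rule orI2, rule impE[OF wk[OF wk[OF b2]] hy])
next
  case (Imp a b)
  then have a1: "derives T \<Gamma> (Imp (apply_subst s a) a)" and a2: "derives T \<Gamma> (Imp a (apply_subst s a))"
    and b1: "derives T \<Gamma> (Imp (apply_subst s b) b)" and b2: "derives T \<Gamma> (Imp b (apply_subst s b))" by auto
  show ?case
    apply simp
    apply (rule conjI; rule impI; rule impI)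
     apply (rule impE[OF wk[OF wk[OF b1]] impE[OF hy2 impE[OF wk[OF wk[OF a2]] hy]]])
    by (rule impE[OF wk[OF wk[OF b2]] impE[OF hy2 impE[OF wk[OF wk[OF a1]] hy]]])
qed

lemma stab_imp: "derives T \<Gamma> (Imp (Neg (Neg b)) b) \<Longrightarrow>
   derives T \<Gamma> (Imp (Neg (Neg (Imp a b))) (Imp a b))"
proof -
  assume sb: "derives T \<Gamma> (Imp (Neg (Neg b)) b)"
  let ?G = "insert a (insert (Neg (Neg (Imp a b))) \<Gamma>)"
  have "derives T ?G (Neg (Neg b))"
  proof (rule negI)
    have "derives T (insert (Neg b) ?G) (Neg (Imp a b))"
      apply (rule negI)
      apply (rule negE[OF hy2])
      apply (rule impE[OF hy])
      by (rule hy3)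
    then show "derives T (insert (Neg b) ?G) Bot"
      by (rule negE[OF hy3])
  qed
  then have "derives T ?G b" by (rule impE[OF wk[OF wk[OF sb]]])
  then show ?thesis by (intro impI)
qed

lemma stab_and: "derives T \<Gamma> (Imp (Neg (Neg a)) a) \<Longrightarrow> derives T \<Gamma> (Imp (Neg (Neg b)) b) \<Longrightarrow>
   derives T \<Gamma> (Imp (Neg (Neg (And a b))) (And a b))"
proof -
  assume sa: "derives T \<Gamma> (Imp (Neg (Neg a)) a)" and sb: "derives T \<Gamma> (Imp (Neg (Neg b)) b)"
  let ?G = "insert (Neg (Neg (And a b))) \<Gamma>"
  have na: "derives T ?G (Neg (Neg a))"
    apply (rule negI)
    apply (rule negE[OF hy2])
    apply (rule negI)
    apply (rule negE[OF hy2])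
    by (rule andE1[OF hy])
  have nb: "derives T ?G (Neg (Neg b))"
    apply (rule negI)
    apply (rule negE[OF hy2])
    apply (rule negI)
    apply (rule negE[OF hy2])
    by (rule andE2[OF hy])
  show ?thesis
    apply (rule impI)
    apply (rule andI)
    using impE[OF wk[OF sa] na] impE[OF wk[OF sb] nb] by auto
qed

lemma dn_intro: "derives T \<Gamma> (Imp a (Neg (Neg a)))"
  apply (rule impI, rule negI)
  by (rule negE[OF hy hy2])

end

lemmas iimpI = impI[OF order_refl] and iimpE = impE[OF order_refl]
  and inegI = negI[OF order_refl] and inegE = negE[OF order_refl]
  and ihy = hy[OF order_refl] and ihy2 = hy2[OF order_refl]
  and iandI = andI[OF order_refl] and iandE1 = andE1[OF order_refl] and iandE2 = andE2[OF order_refl]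
  and ibotE = botE[OF order_refl] and iwk = wk[OF order_refl]

lemma tne: "Imp (Neg (Neg (Neg a))) (Neg a) \<in> IPC"
proof -
  have "derives IPC {} (Imp (Neg (Neg (Neg a))) (Neg a))"
    apply (rule iimpI)
    apply (rule inegI)
    apply (rule inegE[OF ihy2])
    apply (rule inegI)
    by (rule inegE[OF ihy ihy2])
  then show ?thesis by (rule derives_IPC)
qed

definition lit :: "(nat \<Rightarrow> bool) \<Rightarrow> nat \<Rightarrow> form" where
  "lit v p = (if v p then Var p else Neg (Var p))"

lemma elim:
  assumes "finite S"
  shows "(\<forall>v. derives IPC (lit v ` S) (Neg c)) \<Longrightarrow> derives IPC {} (Neg c)"
  using assms
proof (induction S rule: finite_induct)
  case empty then show ?case by simp
next
  case (insert p S)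
  have "derives IPC (lit v ` S) (Neg c)" for v
  proof -
    have l1: "lit (v(p:=True)) q = lit v q" if "q \<in> S" for q
      using insert(2) that unfolding lit_def by (cases "q = p") simp_all
    have l2: "lit (v(p:=False)) q = lit v q" if "q \<in> S" for q
      using insert(2) that unfolding lit_def by (cases "q = p") simp_all
    have s1: "lit (v(p:=True)) ` S = lit v ` S" by (rule image_cong[OF refl l1])
    have s2: "lit (v(p:=True)) p = Var p" by (simp add: lit_def)
    have s3: "lit (v(p:=False)) ` S = lit v ` S" by (rule image_cong[OF refl l2])
    have s4: "lit (v(p:=False)) p = Neg (Var p)" by (simp add: lit_def)
    have e1: "lit (v(p:=True)) ` insert p S = insert (Var p) (lit v ` S)"
      by (simp only: image_insert s1 s2)
    have e2: "lit (v(p:=False)) ` insert p S = insert (Neg (Var p)) (lit v ` S)"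
      by (simp only: image_insert s3 s4)
    have f1: "derives IPC (lit (v(p:=True)) ` insert p S) (Neg c)" using insert(4) by (rule spec)
    have f2: "derives IPC (lit (v(p:=False)) ` insert p S) (Neg c)" using insert(4) by (rule spec)
    show ?thesis
      by (rule cases_neg[OF order_refl f1[unfolded e1] f2[unfolded e2]])
  qed
  then show ?case using insert(3) by blast
qed

lemma glivenko: "(\<forall>v. eval v x) \<Longrightarrow> Neg (Neg x) \<in> IPC"
proof -
  assume t: "\<forall>v. eval v x"
  have "derives IPC (lit v ` vars x) (Neg (Neg x))" for v
  proof -
    have "derives IPC (lit v ` vars x) (if eval v x then apply_subst Var x else Neg (apply_subst Var x))"
    proof (rule kalmar[OF order_refl], rule ballI)
      fix p assume "p \<in> vars x"
      then have "lit v p \<in> lit v ` vars x" by (rule imageI)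
      then have "derives IPC (lit v ` vars x) (lit v p)" by (rule derives.hyp)
      then show "derives IPC (lit v ` vars x) (if v p then Var p else Neg (Var p))"
        by (simp only: lit_def)
    qed
    then have "derives IPC (lit v ` vars x) x" using t by (simp add: subst_Var)
    then show ?thesis by (rule impE[OF order_refl dn_intro[OF order_refl]])
  qed
  then have "derives IPC {} (Neg (Neg x))" using elim[OF finite_vars] by blast
  then show ?thesis by (rule derives_IPC)
qed

theorem lemma4p4:
  assumes "intermediate_logic L"
    and "consistent_in (neg_logic L) (Neg \<phi>)"
  shows "projective_in {s. stable_in (neg_logic L) s} (neg_logic L) (Neg \<phi>)"
proof -
  define T where "T = neg_logic L"
  have IL: "IPC \<subseteq> L" using assms(1) unfolding intermediate_logic_def intermediate_theory_def by blast
  have ipc: "IPC \<subseteq> T"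
    unfolding T_def neg_logic_def neg_trans_def using IL subst_IPC by blast
  define \<psi> where "\<psi> = Neg \<phi>"
  have "\<exists>w. \<not> eval w \<phi>"
  proof (rule ccontr)
    assume "\<nexists>w. \<not> eval w \<phi>"
    then have "\<forall>v. eval v (neg_trans \<phi>)" by (simp add: neg_trans_def eval_subst)
    then have "Neg (Neg (neg_trans \<phi>)) \<in> L" using glivenko IL by blast
    then have "Neg (Neg \<phi>) \<in> T" by (simp add: T_def neg_logic_def neg_trans_def)
    then have "Imp (Neg \<phi>) Bot \<in> T" by (simp only: Neg_def[of "Neg \<phi>"])
    then have "derives T {Neg \<phi>} Bot"
      by (rule derives.mp[OF derives.thy derives.hyp]) simp
    then show False using assms(2) by (simp add: T_def consistent_in_def)
  qed
  then obtain w where w: "\<not> eval w \<phi>" by blast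
  define \<sigma> where "\<sigma> p = (if w p then Imp \<psi> (Var p) else And \<psi> (Var p))" for p
  have svar: "derives T \<Gamma> (Imp (Neg (Neg (Var p))) (Var p))" for \<Gamma> p
    apply (rule derives.thy)
    using tne[of "Var p"] IL by (simp add: T_def neg_logic_def neg_trans_def) blast
  have spsi: "derives T \<Gamma> (Imp (Neg (Neg \<psi>)) \<psi>)" for \<Gamma>
    unfolding \<psi>_def by (rule ax[OF ipc tne])
  have stable: "stable_in T \<sigma>"
    unfolding stable_in_def Iff_def
  proof
    fix p
    show "derives T {} (And (Imp (\<sigma> p) (Neg (Neg (\<sigma> p)))) (Imp (Neg (Neg (\<sigma> p))) (\<sigma> p)))"
      apply (rule andI[OF ipc dn_intro[OF ipc]])
      unfolding \<sigma>_def using stab_imp[OF ipc svar] stab_and[OF ipc spsi svar] by simp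
  qed
  have p1: "derives T {\<psi>, \<sigma> p} (Var p)" for p
    unfolding \<sigma>_def
    using impE[OF ipc hy2[OF ipc] hy[OF ipc]] andE2[OF ipc hy2[OF ipc]] by auto
  have p2: "derives T {\<psi>, Var p} (\<sigma> p)" for p
    unfolding \<sigma>_def
    apply (cases "w p"; simp)
     apply (rule impI[OF ipc], rule derives.hyp, simp)
    by (rule andI[OF ipc]; rule derives.hyp; simp)
  have i1: "derives IPC {\<psi>} (Neg (apply_subst \<sigma> \<phi>))"
  proof -
    have c: "\<forall>p. derives IPC {\<psi>} (Imp (\<sigma> p) (Var p)) \<and> derives IPC {\<psi>} (Imp (Var p) (\<sigma> p))"
    proof
      fix p
      show "derives IPC {\<psi>} (Imp (\<sigma> p) (Var p)) \<and> derives IPC {\<psi>} (Imp (Var p) (\<sigma> p))"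
      proof (cases "w p")
        case True
        then show ?thesis unfolding \<sigma>_def
          apply simp
          apply (rule conjI)
           apply (rule iimpI, rule iimpE[OF ihy ihy2])
          by (rule iimpI, rule iimpI, rule ihy2)
      next
        case False
        then show ?thesis unfolding \<sigma>_def
          apply simp
          apply (rule conjI)
           apply (rule iimpI, rule iandE2[OF ihy])
          by (rule iimpI, rule iandI[OF ihy2 ihy])
      qed
    qed
    have d: "derives IPC {\<psi>} (Imp (apply_subst \<sigma> \<phi>) \<phi>)" using cong[OF order_refl c] by blast
    have "derives IPC (insert (apply_subst \<sigma> \<phi>) {\<psi>}) Bot"
      apply (rule inegE[of _ \<phi>])
       apply (rule derives.hyp, simp add: \<psi>_def)
      by (rule iimpE[OF iwk[OF d] ihy])
    then show ?thesis by (rule inegI)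
  qed
  have i2: "derives IPC {Neg \<psi>} (Neg (apply_subst \<sigma> \<phi>))"
  proof -
    have "derives IPC {Neg \<psi>} (if eval w \<phi> then apply_subst \<sigma> \<phi> else Neg (apply_subst \<sigma> \<phi>))"
    proof (rule kalmar, simp, intro ballI)
      fix p
      show "derives IPC {Neg \<psi>} (if w p then \<sigma> p else Neg (\<sigma> p))"
      proof (cases "w p")
        case True
        then show ?thesis unfolding \<sigma>_def
          apply simp
          apply (rule iimpI)
          apply (rule ibotE)
          by (rule inegE[OF ihy2 ihy])
      next
        case False
        then show ?thesis unfolding \<sigma>_def
          apply simp
          apply (rule inegI)
          apply (rule inegE[OF ihy2])
          by (rule iandE1[OF ihy])
      qed
    qed
    then show ?thesis using w by simp
  qed
  have "derives IPC {} (Neg (apply_subst \<sigma> \<phi>))"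
    by (rule cases_neg[of IPC \<psi>], simp) (use i1 i2 in auto)
  then have "Neg (apply_subst \<sigma> \<phi>) \<in> IPC" by (rule derives_IPC)
  moreover have "apply_subst \<sigma> \<psi> = Neg (apply_subst \<sigma> \<phi>)" unfolding \<psi>_def by (rule subst_Neg)
  ultimately have "apply_subst \<sigma> \<psi> \<in> IPC" by simp
  then have u: "derives T {} (apply_subst \<sigma> \<psi>)" by (rule ax[OF ipc])
  show ?thesis
    unfolding projective_in_def T_def[symmetric] \<psi>_def[symmetric]
    apply (rule bexI[of _ \<sigma>])
    using u p1 p2 apply simp
    using stable by simp
qed

end
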